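(* Let $\mathcal{G}^{\mathbb{c}}=(\mathbb{C},\mathbb{E}^{\mathbb{c}})$ be a C-DMG and let $\mathbb{C}_\mathbb{X},\mathbb{C}_\mathbb{Y},\mathbb{C}_\mathbb{W}$ be pairwise disjoint subsets of $\mathbb{C}$. If $\mathbb{C}_\mathbb{X}$ and $\mathbb{C}_\mathbb{Y}$ are d-separated by $\mathbb{C}_\mathbb{W}$ in $\mathcal{G}^{\mathbb{c}}$, then in every ADMG $\mathcal{G}=(\mathbb{V},\mathbb{E})$ compatible with $\mathcal{G}^{\mathbb{c}}$, the sets $\mathbb{X}=\bigcup_{C\in\mathbb{C}_\mathbb{X}}C$ and $\mathbb{Y}=\bigcup_{C\in\mathbb{C}_\mathbb{Y}}C$ are d-separated by $\mathbb{W}=\bigcup_{C\in\mathbb{C}_\mathbb{W}}C$ in $\mathcal{G}$.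
   Context: An ADMG $\mathcal{G}=(\mathbb{V},\mathbb{E})$ is a graph on a finite vertex set $\mathbb{V}$ whose edges are directed edges $X\rightarrow Y$ and bidirected edges $X\leftrightarrow Y$, such that the directed edges form no directed cycle. A C-DMG $\mathcal{G}^{\mathbb{c}}=(\mathbb{C},\mathbb{E}^{\mathbb{c}})$ compatible with an ADMG $\mathcal{G}=(\mathbb{V},\mathbb{E})$ is the graph whose vertex set $\mathbb{C}=\{C_1,\dots,C_k\}$ is a partition of $\mathbb{V}$ (each vertex $C_i$ is a cluster of variables) and in which, for all $C_i,C_j\in\mathbb{C}$ (possibly $i=j$), $C_i\rightarrow C_j$ (resp. $C_i\leftrightarrow C_j$) is an edge iff there exist $X\in C_i$, $Y\in C_j$ with $X\rightarrow Y$ (resp. $X\leftrightarrow Y$) in $\mathbb{E}$; an ADMG is compatible with a C-DMG if the C-DMG arises from it in this way. A C-DMG may contain directed cycles and self-loops. In a graph $\mathcal{G}^*$ (ADMG or C-DMG), $\mathrm{De}(V)$ denotes the descendants of $V$ (vertices reachable by a directed path from $V$, including $V$ itself). A walk $\langle V_1,\dots,V_n\rangle$ (consecutive vertices joined by a specified edge) is blocked by a set $\mathbb{W}^*$ if (1) $V_1\in\mathbb{W}^*$ or $V_n\in\mathbb{W}^*$; or (2) for some $1<i<n$, the walk contains $V_{i-1}\,*\!-\!*\,V_i\rightarrow V_{i+1}$ or $V_{i-1}\leftarrow V_i\,*\!-\!*\,V_{i+1}$ (where $*\!-\!*$ is any edge type) and $V_i\in\mathbb{W}^*$; or (3) for some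 $1<i<n$, the walk contains $V_{i-1}\,*\!\!\rightarrow V_i\leftarrow\!\!*\,V_{i+1}$ (each of these two edges being either directed into $V_i$ or bidirected) and $\mathrm{De}(V_i)\cap\mathbb{W}^*=\emptyset$. A walk that is not blocked is active. A path is a walk with no repeated vertex. For disjoint vertex sets, $\mathbb{W}^*$ d-separates $\mathbb{X}^*$ and $\mathbb{Y}^*$ if it blocks every path from a vertex of $\mathbb{X}^*$ to a vertex of $\mathbb{Y}^*$. *)

theory Defs
  imports Main
begin

text \<open>Mixed graphs: a vertex set, directed edges (a,b) meaning a \<rightarrow> b, and
bidirected edges; a pair (a,b) in bid represents a \<leftrightarrow> b (orientation irrelevant).\<close>
record 'v mgraph =
  verts :: "'v set"
  dir :: "'v rel"
  bid :: "'v rel"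

text \<open>Edge label between consecutive walk vertices v_i and v_(i+1):
Fwd: v_i \<rightarrow> v_(i+1);  Bwd: v_i \<leftarrow> v_(i+1);  Bi: v_i \<leftrightarrow> v_(i+1).\<close>
datatype ekind = Fwd | Bwd | Bi

definition has_edge :: "'v mgraph \<Rightarrow> 'v \<Rightarrow> ekind \<Rightarrow> 'v \<Rightarrow> bool" where
  "has_edge G a k b = (case k of
      Fwd \<Rightarrow> (a, b) \<in> dir G
    | Bwd \<Rightarrow> (b, a) \<in> dir G
    | Bi \<Rightarrow> (a, b) \<in> bid G \<or> (b, a) \<in> bid G)"

definition is_ADMG :: "'v mgraph \<Rightarrow> bool" where
  "is_ADMG G = (finite (verts G) \<and> dir G \<subseteq> verts G \<times> verts G
     \<and> bid G \<subseteq> verts G \<times> verts G \<and> (\<forall>x. (x, x) \<notin> (dir G)\<^sup>+))"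

definition is_partition :: "'v set set \<Rightarrow> 'v set \<Rightarrow> bool" where
  "is_partition P V = ((\<forall>C\<in>P. C \<noteq> {}) \<and> \<Union>P = V
     \<and> (\<forall>C\<in>P. \<forall>C'\<in>P. C \<noteq> C' \<longrightarrow> C \<inter> C' = {}))"

definition compatible :: "'v mgraph \<Rightarrow> 'v set mgraph \<Rightarrow> bool" where
  "compatible G Gc = (is_partition (verts Gc) (verts G)
     \<and> dir Gc = {(Ci, Cj). Ci \<in> verts Gc \<and> Cj \<in> verts Gc \<and> (\<exists>x\<in>Ci. \<exists>y\<in>Cj. (x, y) \<in> dir G)}
     \<and> bid Gc = {(Ci, Cj). Ci \<in> verts Gc \<and> Cj \<in> verts Gc \<and> (\<exists>x\<in>Ci. \<exists>y\<in>Cj. (x, y) \<in> bid G)})"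

definition De :: "'v mgraph \<Rightarrow> 'v \<Rightarrow> 'v set" where
  "De G v = {w. (v, w) \<in> (dir G)\<^sup>*}"

definition is_walk :: "'v mgraph \<Rightarrow> 'v list \<Rightarrow> ekind list \<Rightarrow> bool" where
  "is_walk G vs es = (vs \<noteq> [] \<and> set vs \<subseteq> verts G \<and> length es = length vs - 1
     \<and> (\<forall>i < length es. has_edge G (vs ! i) (es ! i) (vs ! Suc i)))"

definition is_path :: "'v mgraph \<Rightarrow> 'v list \<Rightarrow> ekind list \<Rightarrow> bool" where
  "is_path G vs es = (is_walk G vs es \<and> distinct vs)"

definition blocked :: "'v mgraph \<Rightarrow> 'v list \<Rightarrow> ekind list \<Rightarrow> 'v set \<Rightarrow> bool" where
  "blocked G vs es W =
     (hd vs \<in> W \<or> last vs \<in> W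
      \<or> (\<exists>i. 0 < i \<and> i < length vs - 1 \<and> vs ! i \<in> W
              \<and> (es ! i = Fwd \<or> es ! (i - 1) = Bwd))
      \<or> (\<exists>i. 0 < i \<and> i < length vs - 1
              \<and> (es ! (i - 1) = Fwd \<or> es ! (i - 1) = Bi)
              \<and> (es ! i = Bwd \<or> es ! i = Bi)
              \<and> De G (vs ! i) \<inter> W = {}))"

definition d_separated :: "'v mgraph \<Rightarrow> 'v set \<Rightarrow> 'v set \<Rightarrow> 'v set \<Rightarrow> bool" where
  "d_separated G X Y W = (\<forall>vs es. is_path G vs es \<and> hd vs \<in> X \<and> last vs \<in> Y
     \<longrightarrow> blocked G vs es W)"

end

theory Submission
  imports Defs
begin

definition coll :: "ekind list \<Rightarrow> nat \<Rightarrow> bool" where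
  "coll es k = ((es!(k-1) = Fwd \<or> es!(k-1) = Bi) \<and> (es!k = Bwd \<or> es!k = Bi))"

definition okk :: "'v mgraph \<Rightarrow> 'v set \<Rightarrow> 'v list \<Rightarrow> ekind list \<Rightarrow> nat \<Rightarrow> bool" where
  "okk G W vs es k = (if coll es k then De G (vs!k) \<inter> W \<noteq> {} else vs!k \<notin> W)"

lemma blocked_iff:
  "blocked G vs es W \<longleftrightarrow> hd vs \<in> W \<or> last vs \<in> W \<or>
     (\<exists>k. 0 < k \<and> k < length vs - 1 \<and> \<not> okk G W vs es k)"
proof -
  have "\<And>k. (\<not> okk G W vs es k) \<longleftrightarrow> ((vs ! k \<in> W \<and> (es ! k = Fwd \<or> es ! (k - 1) = Bwd))
     \<or> ((es ! (k - 1) = Fwd \<or> es ! (k - 1) = Bi) \<and> (es ! k = Bwd \<or> es ! k = Bi)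
              \<and> De G (vs ! k) \<inter> W = {}))"
    unfolding okk_def coll_def
    by (auto, (case_tac "es ! k"; case_tac "es ! (k - 1)"; simp)+)
  then show ?thesis unfolding blocked_def by blast
qed

lemma fwd_chain:
  assumes "is_walk G vs es" "\<forall>m. a \<le> m \<and> m < b \<longrightarrow> es!m = Fwd" "a \<le> b" "b < length vs"
  shows "(vs!a, vs!b) \<in> (dir G)\<^sup>*"
  using assms(2-4)
proof (induction b)
  case 0
  then show ?case by simp
next
  case (Suc b)
  show ?case
  proof (cases "a = Suc b")
    case True then show ?thesis by simp
  next
    case False
    then have ab: "a \<le> b" using Suc by simp
    have "(vs!a, vs!b) \<in> (dir G)\<^sup>*" using Suc ab by simp
    moreover have "es!b = Fwd" using Suc ab by simp
    moreover have "b < length es" using Suc assms(1) unfolding is_walk_def by auto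
    ultimately have "(vs!a, vs!Suc b) \<in> (dir G)\<^sup>*"
      using assms(1) unfolding is_walk_def has_edge_def
      by (metis (mono_tags, lifting) ekind.simps(7) rtrancl.rtrancl_into_rtrancl)
    then show ?thesis .
  qed
qed

lemma walk_to_path:
  "is_walk G vs es \<Longrightarrow> \<not> blocked G vs es W \<Longrightarrow> hd vs \<in> X \<Longrightarrow> last vs \<in> Y \<Longrightarrow>
   \<exists>vs' es'. is_path G vs' es' \<and> hd vs' \<in> X \<and> last vs' \<in> Y \<and> \<not> blocked G vs' es' W"
proof (induction "length vs" arbitrary: vs es rule: less_induct)
  case less
  show ?case
  proof (cases "distinct vs")
    case True
    then show ?thesis using less.prems unfolding is_path_def by blast
  next
    case False
    then obtain i j where ij: "i < j" "j < length vs" "vs!i = vs!j"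
      by (metis distinct_conv_nth linorder_neqE_nat)
    define n where "n = length vs - 1"
    have nv: "length vs = Suc n" using less.prems(1) unfolding is_walk_def n_def by auto
    have ne: "length es = n" using less.prems(1) unfolding is_walk_def n_def by auto
    have jn: "j \<le> n" using ij nv by simp
    define vs' where "vs' = map (\<lambda>k. if k \<le> i then vs!k else vs!(k+j-i)) [0..<i+1+n-j]"
    define es' where "es' = map (\<lambda>k. if k < i then es!k else es!(k+j-i)) [0..<i+n-j]"
    have lv': "length vs' = Suc (i+n-j)" unfolding vs'_def using ij jn by simp
    have le': "length es' = i+n-j" unfolding es'_def by simp
    have v'nth: "\<And>k. k < length vs' \<Longrightarrow> vs'!k = vs!(if k \<le> i then k else k+j-i)"
      unfolding vs'_def by (simp add: nth_append)
    have v'nth2: "\<And>k. k < length vs' \<Longrightarrow> i \<le> k \<Longrightarrow> vs'!k = vs!(k+j-i)"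
    proof -
      fix k assume a: "k < length vs'" "i \<le> k"
      show "vs'!k = vs!(k+j-i)"
      proof (cases "k = i")
        case True then show ?thesis using v'nth[OF a(1)] ij by simp
      next
        case False then show ?thesis using v'nth[OF a(1)] a(2) by simp
      qed
    qed
    have e'nth: "\<And>k. k < length es' \<Longrightarrow> es'!k = es!(if k < i then k else k+j-i)"
      unfolding es'_def by simp
    have shorter: "length vs' < length vs" using lv' nv ij by simp
    have okk_orig: "\<And>k. 0 < k \<Longrightarrow> k < n \<Longrightarrow> okk G W vs es k"
      using less.prems(2) unfolding blocked_iff n_def by blast
    have hdv: "hd vs \<notin> W" and lastv: "last vs \<notin> W"
      using less.prems(2) unfolding blocked_iff by auto
    have walk': "is_walk G vs' es'"
    proof -
      have "set vs' \<subseteq> set vs"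
      proof
        fix x assume "x \<in> set vs'"
        then obtain k where "k < length vs'" "x = vs'!k" by (metis in_set_conv_nth)
        then show "x \<in> set vs" using v'nth lv' nv jn ij
          by (auto simp: split: if_splits)
      qed
      moreover have "\<forall>k < length es'. has_edge G (vs'!k) (es'!k) (vs'!Suc k)"
      proof (intro allI impI)
        fix k assume k: "k < length es'"
        have E: "\<And>m. m < n \<Longrightarrow> has_edge G (vs!m) (es!m) (vs!Suc m)"
          using less.prems(1) ne unfolding is_walk_def by auto
        show "has_edge G (vs'!k) (es'!k) (vs'!Suc k)"
        proof (cases "k < i")
          case True
          then show ?thesis using E[of k] v'nth e'nth k le' lv' ij jn by simp
        next
          case False
          have "vs'!k = vs!(k+j-i)" using v'nth2 False k le' lv' by simp
          moreover have "vs'!Suc k = vs!Suc (k+j-i)" using v'nth2[of "Suc k"] False k le' lv' ij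
            by (simp add: Suc_diff_le)
          moreover have "es'!k = es!(k+j-i)" using e'nth False k by simp
          ultimately show ?thesis using E[of "k+j-i"] k le' ij by simp
        qed
      qed
      ultimately show ?thesis using less.prems(1) lv' le' unfolding is_walk_def by auto
    qed
    have hd': "hd vs' = hd vs"
    proof -
      have "vs' \<noteq> []" "vs \<noteq> []" using lv' nv by auto
      then show ?thesis using v'nth[of 0] lv' by (simp add: hd_conv_nth)
    qed
    have last': "last vs' = last vs"
    proof -
      have "vs' \<noteq> []" using lv' by auto
      then have "last vs' = vs'!(i+n-j)" using lv' by (simp add: last_conv_nth)
      also have "\<dots> = vs!n" using v'nth2[of "i+n-j"] lv' ij jn by simp
      also have "\<dots> = last vs"
      proof -
        have "vs \<noteq> []" using less.prems(1) unfolding is_walk_def by simp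
        then show ?thesis using nv last_conv_nth[of vs] by simp
      qed
      finally show ?thesis .
    qed
    have unbl': "\<not> blocked G vs' es' W"
      unfolding blocked_iff
    proof (intro notI, elim disjE exE conjE)
      assume "hd vs' \<in> W" then show False using hd' hdv by simp
    next
      assume "last vs' \<in> W" then show False using last' lastv by simp
    next
      fix k assume k0: "0 < k" and kl: "k < length vs' - 1" and nok: "\<not> okk G W vs' es' k"
      show False
      proof (cases "k < i")
        case True
        have "okk G W vs es k" using okk_orig k0 True ij jn by simp
        moreover have "vs'!k = vs!k" using v'nth kl True by simp
        moreover have "es'!k = es!k" "es'!(k-1) = es!(k-1)" using e'nth kl lv' le' True by auto
        ultimately have "okk G W vs' es' k" unfolding okk_def coll_def by simp
          then show False using nok by simp
      next
        case False
        note ki = False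
        show False
        proof (cases "k = i")
          case False
          have "okk G W vs es (k+j-i)" using okk_orig k0 ki False kl lv' ij by simp
          moreover have "vs'!k = vs!(k+j-i)" using v'nth2 kl ki by simp
          moreover have "es'!k = es!(k+j-i)" "es'!(k-1) = es!(k-1+j-i)"
            using e'nth kl lv' le' ki False by auto
          moreover have "k-1+j-i = k+j-i-1" using ki False by simp
          ultimately have "okk G W vs' es' k" unfolding okk_def coll_def by simp
          then show False using nok by simp
        next
          case True
          have i0: "0 < i" and jlt: "j < n" using True k0 kl lv' by auto
          have vi: "vs'!i = vs!i" using v'nth kl True by simp
          have ea: "es'!(i-1) = es!(i-1)" using e'nth kl lv' le' True i0 by auto
          have eb: "es'!i = es!j" using e'nth kl lv' le' True by auto
          have oi: "okk G W vs es i" using okk_orig i0 ij jlt by simp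
          have oj: "okk G W vs es j" using okk_orig i0 ij jlt by simp
          show False
          proof (cases "coll es' i")
            case False
            then have "es!(i-1) = Bwd \<or> es!j = Fwd" using ea eb unfolding coll_def
              by (cases "es!(i-1)"; cases "es!j"; simp)
            then have "vs!i \<notin> W" using oi oj ij unfolding okk_def coll_def by auto
            then show False using nok True vi False unfolding okk_def by simp
          next
            case True
            note c' = True
            then have ca: "es!(i-1) = Fwd \<or> es!(i-1) = Bi" and cb: "es!j = Bwd \<or> es!j = Bi"
              using ea eb unfolding coll_def by auto
            have "De G (vs!i) \<inter> W \<noteq> {}"
            proof (cases "coll es i")
              case True then show ?thesis using oi unfolding okk_def by simp
            next
              case False
              then have fi: "es!i = Fwd" using ca unfolding coll_def
                by (cases "es!i"; auto)
              define S where "S = {k. i < k \<and> k \<le> j \<and> (k = j \<or> es!k \<noteq> Fwd)}"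
              have "j \<in> S" unfolding S_def using ij by simp
              define k where "k = Least (\<lambda>k. k \<in> S)"
              have kS: "k \<in> S" unfolding k_def using \<open>j \<in> S\<close> by (rule LeastI[of "\<lambda>k. k \<in> S" j])
              have kmin: "\<And>m. m \<in> S \<Longrightarrow> k \<le> m" unfolding k_def by (rule Least_le[of "\<lambda>k. k \<in> S"])
              have allF: "\<forall>m. i \<le> m \<and> m < k \<longrightarrow> es!m = Fwd"
              proof (intro allI impI)
                fix m assume m: "i \<le> m \<and> m < k"
                show "es!m = Fwd"
                proof (cases "m = i")
                  case True then show ?thesis using fi by simp
                next
                  case False
                  have "k \<le> j" using kS unfolding S_def by simp
                  then have "m \<notin> S" using kmin m by fastforce
                  then show ?thesis using m False \<open>k \<le> j\<close> unfolding S_def by auto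
                qed
              qed
              have kj: "i < k" "k \<le> j" using kS unfolding S_def by auto
              have reach: "(vs!i, vs!k) \<in> (dir G)\<^sup>*"
                using fwd_chain[OF less.prems(1) allF] kj ij by simp
              have ekm: "es!(k-1) = Fwd" using allF kj by simp
              have "De G (vs!k) \<inter> W \<noteq> {}"
              proof (cases "k = j")
                case True
                then have "coll es k" using ekm cb unfolding coll_def by simp
                then show ?thesis using oj True unfolding okk_def by simp
              next
                case False
                then have "es!k \<noteq> Fwd" using kS unfolding S_def by simp
                then have "coll es k" using ekm unfolding coll_def by (cases "es!k"; simp)
                moreover have "okk G W vs es k" using okk_orig kj jlt by simp
                ultimately show ?thesis unfolding okk_def by simp
              qed
              then show ?thesis using reach unfolding De_def
                by (auto intro: rtrancl_trans)
            qed
            then show False using nok c' vi \<open>k = i\<close> unfolding okk_def by simp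
          qed
        qed
      qed
    qed
    show ?thesis using less.hyps[OF shorter walk' unbl'] hd' last' less.prems(3,4) by simp
  qed
qed


definition clu :: "'v set set \<Rightarrow> 'v \<Rightarrow> 'v set" where
  "clu P v = (THE C. C \<in> P \<and> v \<in> C)"

lemma clu_eq:
  assumes "is_partition P V" "C \<in> P" "v \<in> C"
  shows "clu P v = C"
proof -
  have disj: "\<forall>C\<in>P. \<forall>C'\<in>P. C \<noteq> C' \<longrightarrow> C \<inter> C' = {}"
    using assms(1) unfolding is_partition_def by simp
  have u: "D = C" if "D \<in> P \<and> v \<in> D" for D
  proof (rule ccontr)
    assume "D \<noteq> C"
    then have "D \<inter> C = {}" using disj that assms(2) by simp
    then show False using that assms(3) by auto
  qed
  have e: "C \<in> P \<and> v \<in> C" using assms(2,3) by (rule conjI)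
  show ?thesis unfolding clu_def
    using the_equality[of "\<lambda>D. D \<in> P \<and> v \<in> D" C, OF e u] .
qed

lemma clu_props:
  assumes "is_partition P V" "v \<in> V"
  shows "clu P v \<in> P \<and> v \<in> clu P v"
proof -
  have "\<Union>P = V" using assms(1) unfolding is_partition_def by (elim conjE)
  then have "v \<in> \<Union>P" using assms(2) by (rule ssubst)
  then obtain C where C: "C \<in> P" "v \<in> C" by (rule UnionE)
  then show ?thesis using clu_eq[OF assms(1) C] by simp
qed

lemma edge_map:
  assumes "compatible G Gc" "a \<in> verts G" "b \<in> verts G" "has_edge G a k b"
  shows "has_edge Gc (clu (verts Gc) a) k (clu (verts Gc) b)"
proof -
  have P: "is_partition (verts Gc) (verts G)" using assms(1) unfolding compatible_def by simp
  have D: "dir Gc = {(Ci, Cj). Ci \<in> verts Gc \<and> Cj \<in> verts Gc \<and> (\<exists>x\<in>Ci. \<exists>y\<in>Cj. (x, y) \<in> dir G)}"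
   and B: "bid Gc = {(Ci, Cj). Ci \<in> verts Gc \<and> Cj \<in> verts Gc \<and> (\<exists>x\<in>Ci. \<exists>y\<in>Cj. (x, y) \<in> bid G)}"
    using assms(1) unfolding compatible_def by simp_all
  note ca = clu_props[OF P assms(2)] and cb = clu_props[OF P assms(3)]
  show ?thesis
  proof (cases k)
    case Fwd
    then have "(a, b) \<in> dir G" using assms(4) unfolding has_edge_def by simp
    then have "(clu (verts Gc) a, clu (verts Gc) b) \<in> dir Gc" unfolding D using ca cb by blast
    then show ?thesis using Fwd unfolding has_edge_def by simp
  next
    case Bwd
    then have "(b, a) \<in> dir G" using assms(4) unfolding has_edge_def by simp
    then have "(clu (verts Gc) b, clu (verts Gc) a) \<in> dir Gc" unfolding D using ca cb by blast
    then show ?thesis using Bwd unfolding has_edge_def by simp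
  next
    case Bi
    then have "(a, b) \<in> bid G \<or> (b, a) \<in> bid G" using assms(4) unfolding has_edge_def by simp
    then have "(clu (verts Gc) a, clu (verts Gc) b) \<in> bid Gc \<or> (clu (verts Gc) b, clu (verts Gc) a) \<in> bid Gc"
      unfolding B using ca cb by blast
    then show ?thesis using Bi unfolding has_edge_def by simp
  qed
qed

lemma map_rtrancl:
  assumes "is_ADMG G" "compatible G Gc" "(v, w) \<in> (dir G)\<^sup>*" "v \<in> verts G"
  shows "(clu (verts Gc) v, clu (verts Gc) w) \<in> (dir Gc)\<^sup>*"
  using assms(3,4)
proof (induction rule: rtrancl_induct)
  case base then show ?case by simp
next
  case (step y z)
  have P: "is_partition (verts Gc) (verts G)" using assms(2) unfolding compatible_def by simp
  have yz: "y \<in> verts G" "z \<in> verts G" using step(2) assms(1) unfolding is_ADMG_def by auto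
  have "(clu (verts Gc) y, clu (verts Gc) z) \<in> dir Gc"
    using edge_map[OF assms(2) yz, of Fwd] step(2) unfolding has_edge_def by simp
  then show ?case using step by (meson rtrancl.rtrancl_into_rtrancl)
qed

theorem theorem1:
  fixes G :: "'v mgraph" and Gc :: "'v set mgraph"
    and CX CY CW :: "'v set set"
  assumes "is_ADMG G"
    and "compatible G Gc"
    and "CX \<subseteq> verts Gc" and "CY \<subseteq> verts Gc" and "CW \<subseteq> verts Gc"
    and "CX \<inter> CY = {}" and "CX \<inter> CW = {}" and "CY \<inter> CW = {}"
    and "d_separated Gc CX CY CW"
  shows "d_separated G (\<Union>CX) (\<Union>CY) (\<Union>CW)"
  unfolding d_separated_def
proof (intro allI impI)
  fix vs es
  assume a: "is_path G vs es \<and> hd vs \<in> \<Union>CX \<and> last vs \<in> \<Union>CY"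
  have P: "is_partition (verts Gc) (verts G)" using assms(2) unfolding compatible_def by simp
  define c where "c = clu (verts Gc)"
  have walk: "is_walk G vs es" using a unfolding is_path_def by simp
  have cp: "\<And>v. v \<in> verts G \<Longrightarrow> c v \<in> verts Gc \<and> v \<in> c v" unfolding c_def
    using clu_props[OF P] by blast
  have ce: "\<And>C v. C \<in> verts Gc \<Longrightarrow> v \<in> C \<Longrightarrow> c v = C" unfolding c_def using clu_eq[OF P] by blast
  have sv: "set vs \<subseteq> verts G" using walk unfolding is_walk_def by simp
  have vne: "vs \<noteq> []" using walk unfolding is_walk_def by simp
  have walkc: "is_walk Gc (map c vs) es"
    unfolding is_walk_def
  proof (intro conjI allI impI)
    show "map c vs \<noteq> []" using vne by simp
    show "set (map c vs) \<subseteq> verts Gc" using sv cp by auto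
    show "length es = length (map c vs) - 1" using walk unfolding is_walk_def by simp
    fix i assume i: "i < length es"
    have il: "i < length vs" "Suc i < length vs" using i walk unfolding is_walk_def by auto
    have h: "has_edge G (vs!i) (es!i) (vs!Suc i)" using i walk unfolding is_walk_def by simp
    have m: "vs!i \<in> verts G" "vs!Suc i \<in> verts G" using il sv by auto
    have "has_edge Gc (c (vs!i)) (es!i) (c (vs!Suc i))"
      unfolding c_def using edge_map[OF assms(2) m h] .
    then show "has_edge Gc (map c vs ! i) (es ! i) (map c vs ! Suc i)" using il by simp
  qed
  show "blocked G vs es (\<Union>CW)"
  proof (rule ccontr)
    assume nb: "\<not> blocked G vs es (\<Union>CW)"
    have "\<not> blocked Gc (map c vs) es CW"
      unfolding blocked_iff
    proof (intro notI, elim disjE exE conjE)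
      assume "hd (map c vs) \<in> CW"
      moreover have "hd vs \<in> c (hd vs)" using cp sv hd_in_set[OF vne] by blast
      ultimately have "hd vs \<in> \<Union>CW" using vne by (auto simp: hd_map intro!: UnionI)
      then show False using nb unfolding blocked_iff by simp
    next
      assume "last (map c vs) \<in> CW"
      moreover have "last vs \<in> c (last vs)" using cp sv last_in_set[OF vne] by blast
      ultimately have "last vs \<in> \<Union>CW" using vne by (auto simp: last_map intro!: UnionI)
      then show False using nb unfolding blocked_iff by simp
    next
      fix k assume k0: "0 < k" and kl: "k < length (map c vs) - 1"
        and nok: "\<not> okk Gc CW (map c vs) es k"
      have kl2: "k < length vs - 1" using kl by simp
      have ok: "okk G (\<Union>CW) vs es k" using nb k0 kl2 unfolding blocked_iff by blast
      have kv: "vs!k \<in> verts G" using kl sv by auto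
      have mk: "map c vs ! k = c (vs!k)" using kl by simp
      show False
      proof (cases "coll es k")
        case True
        then obtain w where w: "(vs!k, w) \<in> (dir G)\<^sup>*" "w \<in> \<Union>CW"
          using ok unfolding okk_def De_def by auto
        then obtain C where C: "C \<in> CW" "w \<in> C" by auto
        have "(c (vs!k), c w) \<in> (dir Gc)\<^sup>*" unfolding c_def
          using map_rtrancl[OF assms(1,2) w(1) kv] .
        moreover have "c w = C" using ce C assms(5) by blast
        ultimately have "De Gc (c (vs!k)) \<inter> CW \<noteq> {}" using C unfolding De_def by auto
        then show False using nok True mk unfolding okk_def by simp
      next
        case False
        then have "vs!k \<notin> \<Union>CW" using ok unfolding okk_def by simp
        then have "c (vs!k) \<notin> CW" using cp[OF kv] by blast
        then show False using nok False mk unfolding okk_def by simp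
      qed
    qed
    moreover have "hd (map c vs) \<in> CX"
    proof -
      obtain C where C: "C \<in> CX" "hd vs \<in> C" using a by auto
      then show ?thesis using ce assms(3) vne by (auto simp: hd_map)
    qed
    moreover have "last (map c vs) \<in> CY"
    proof -
      obtain C where C: "C \<in> CY" "last vs \<in> C" using a by auto
      then show ?thesis using ce assms(4) vne by (auto simp: last_map)
    qed
    ultimately obtain vs' es' where "is_path Gc vs' es'" "hd vs' \<in> CX" "last vs' \<in> CY"
        "\<not> blocked Gc vs' es' CW"
      using walk_to_path[OF walkc] by blast
    then show False using assms(9) unfolding d_separated_def by blast
  qed
qed

end
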